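(* Let $f\in\mathbb{C}[x_1]$ have exactly $t\ge2$ monomial terms and suppose $\mathrm{ArchTrop}(f)$ has exactly $\ell$ points. Then $$\sup_{\sigma\in\mathrm{ArchTrop}(f)}\ \inf_{\rho\in\mathrm{Amoeba}(f)}|\rho-\sigma|\le(2\ell-1)\log(t-1).$$
   Context: For $f(x_1)=\sum_{i=1}^tc_ix_1^{a_i}$ (distinct $a_i$, $c_i\ne0$), $\mathrm{ArchNewt}(f)=\mathrm{Conv}\{(a_i,-\log|c_i|)\}\subset\mathbb{R}^2$ and $\mathrm{ArchTrop}(f)$ is the set of $v\in\mathbb{R}$ such that $(v,-1)$ is an outer normal of an edge of $\mathrm{ArchNewt}(f)$ (the slopes of the lower edges). $\mathrm{Amoeba}(f)=\{\log|\zeta|:\zeta\in\mathbb{C}^*,f(\zeta)=0\}$. *)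

theory Defs
  imports "HOL-Analysis.Analysis" "HOL-Computational_Algebra.Polynomial"
begin

definition supp :: "complex poly \<Rightarrow> nat set" where
  "supp f = {i. coeff f i \<noteq> 0}"

definition ArchNewt :: "complex poly \<Rightarrow> (real \<times> real) set" where
  "ArchNewt f = convex hull {(real a, - ln (cmod (coeff f a))) | a. a \<in> supp f}"

definition face_outer :: "(real \<times> real) set \<Rightarrow> real \<times> real \<Rightarrow> (real \<times> real) set" where
  "face_outer P w = {p \<in> P. \<forall>q\<in>P. w \<bullet> q \<le> w \<bullet> p}"

text \<open>Archimedean tropical variety: all v such that (v,-1) is an outer normal of an
  edge of ArchNewt f, i.e. the face of ArchNewt f with outer normal (v,-1) is an edge
  (a one-dimensional face; for a polygon in the plane and nonzero normal this means
  the face contains two distinct points).\<close>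
definition ArchTrop :: "complex poly \<Rightarrow> real set" where
  "ArchTrop f = {v. \<exists>p q. p \<in> face_outer (ArchNewt f) (v, -1) \<and>
                           q \<in> face_outer (ArchNewt f) (v, -1) \<and> p \<noteq> q}"

definition Amoeba :: "complex poly \<Rightarrow> real set" where
  "Amoeba f = {ln (cmod z) | z. z \<noteq> 0 \<and> poly f z = 0}"

end

theory Submission
  imports Defs "HOL-Computational_Algebra.Fundamental_Theorem_Algebra"
begin


definition rou :: "nat \<Rightarrow> nat \<Rightarrow> complex" where
  "rou N m = cis (2 * pi * real m / real N)"

lemma rou_inj: "N > 0 \<Longrightarrow> inj_on (rou N) {..<N}"
  using Complex.bij_betw_roots_unity[of N] unfolding bij_betw_def rou_def by auto

lemma rou_pow: "rou N m ^ e = rou N (m * e)"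
  unfolding rou_def Complex.DeMoivre by (simp add: mult_ac)

lemma rou_pow_N: "N > 0 \<Longrightarrow> (rou N m) ^ N = 1"
proof -
  assume "N > 0"
  have "(rou N m) ^ N = cis (2 * pi * real m)"
    using \<open>N>0\<close> unfolding rou_def Complex.DeMoivre by (simp add: mult_ac)
  also have "\<dots> = cis (2 * pi) ^ m" unfolding Complex.DeMoivre by (simp add: mult_ac)
  also have "cis (2 * pi) = 1" by (simp add: complex_eq_iff)
  finally show "(rou N m) ^ N = 1" by simp
qed

lemma rou_0: "rou N 0 = 1" unfolding rou_def by simp

lemma norm_rou: "norm (rou N m) = 1" unfolding rou_def by simp

lemma rou_mod: "N > 0 \<Longrightarrow> rou N e = rou N (e mod N)"
proof -
  assume N: "N > 0"
  have "rou N e = rou N 1 ^ (N * (e div N) + e mod N)" using rou_pow[of N 1 e] by simp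
  also have "rou N 1 ^ (N * (e div N) + e mod N) = (rou N 1 ^ N) ^ (e div N) * rou N 1 ^ (e mod N)"
    by (simp only: power_add power_mult)
  also have "\<dots> = rou N (e mod N)" using rou_pow_N[OF N, of 1] rou_pow[of N 1] by simp
  finally show ?thesis .
qed

lemma rou_eq_1_iff: "N > 0 \<Longrightarrow> rou N e = 1 \<longleftrightarrow> N dvd e"
proof -
  assume N: "N > 0"
  have "rou N e = 1 \<longleftrightarrow> rou N (e mod N) = rou N 0" using rou_mod[OF N] rou_0 by simp
  also have "\<dots> \<longleftrightarrow> e mod N = 0"
    using rou_inj[OF N] N by (auto dest: inj_onD)
  finally show ?thesis by auto
qed

lemma sum_rou_pow: "N > 0 \<Longrightarrow> (\<Sum>m<N. rou N m ^ e) = (if N dvd e then of_nat N else 0)"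
proof -
  assume N: "N > 0"
  define w where "w = rou N e"
  have eq: "rou N m ^ e = w ^ m" for m
    unfolding w_def rou_pow by (simp add: mult.commute)
  have wN: "w ^ N = 1" unfolding w_def using rou_pow_N[OF N, of e] by simp
  show ?thesis
  proof (cases "N dvd e")
    case True
    hence "w = 1" using rou_eq_1_iff[OF N] w_def by simp
    thus ?thesis using True by (simp add: eq)
  next
    case False
    hence "w \<noteq> 1" using rou_eq_1_iff[OF N] w_def by simp
    thus ?thesis using False by (simp add: eq sum_gp_strict wN)
  qed
qed

lemma prod_rou:
  assumes N: "N > 0" and r: "r \<noteq> 0"
  shows "(\<Prod>m<N. z - r * rou N m) = z ^ N - r ^ N"
proof -
  define P where "P = (\<Prod>m<N. [:- (r * rou N m), 1:])"
  define Q where "Q = monom 1 N - [:r ^ N:]"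
  have degP: "degree P = N" unfolding P_def
    by (subst degree_prod_eq_sum_degree) auto
  have lcP: "coeff P N = 1"
  proof -
    have "coeff P N = lead_coeff P" using degP by simp
    also have "\<dots> = 1" unfolding P_def by (simp add: lead_coeff_prod)
    finally show ?thesis .
  qed
  have degQ: "degree Q \<le> N" unfolding Q_def
    using degree_diff_le_max[of "monom 1 N" "[:r^N:]"] degree_monom_le[of "1::complex" N] by (simp add: max_def split: if_splits)
  have lcQ: "coeff Q N = 1" using N unfolding Q_def by (cases N) (auto simp: coeff_monom)
  have "P = Q"
  proof (rule poly_eqI_degree_lead_coeff[where A = "(\<lambda>m. r * rou N m) ` {..<N}" and n = N])
    show "coeff P N = coeff Q N" using lcP lcQ by simp
    have "inj_on (\<lambda>m. r * rou N m) {..<N}" using rou_inj[OF N] r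
      by (auto simp: inj_on_def)
    thus "N \<le> card ((\<lambda>m. r * rou N m) ` {..<N})" by (simp add: card_image)
    show "degree P \<le> N" using degP by simp
    show "degree Q \<le> N" by (rule degQ)
    fix z assume "z \<in> (\<lambda>m. r * rou N m) ` {..<N}"
    then obtain m where m: "m < N" "z = r * rou N m" by auto
    have "poly P z = 0" unfolding P_def using m by (auto simp: poly_prod)
    moreover have "poly Q z = 0" unfolding Q_def using m rou_pow_N[OF N, of m]
      by (simp add: poly_monom power_mult_distrib)
    ultimately show "poly P z = poly Q z" by simp
  qed
  hence "poly P z = poly Q z" by simp
  thus ?thesis unfolding P_def Q_def by (simp add: poly_prod poly_monom)
qed



lemma sum_ln_roots:
  fixes root :: "nat \<Rightarrow> complex" and lc :: complex and r :: real
  assumes N: "N > 0" and r: "r > 0"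
    and nz: "\<And>k m. k < n \<Longrightarrow> m < N \<Longrightarrow> of_real r * rou N m \<noteq> root k"
    and lc: "lc \<noteq> 0"
  shows "(\<Sum>m<N. ln (cmod (lc * (\<Prod>k<n. of_real r * rou N m - root k))))
         = real N * ln (cmod lc) + (\<Sum>k<n. ln (cmod (of_real r ^ N - root k ^ N)))"
proof -
  have "(\<Sum>m<N. ln (cmod (lc * (\<Prod>k<n. of_real r * rou N m - root k))))
      = (\<Sum>m<N. ln (cmod lc) + (\<Sum>k<n. ln (cmod (of_real r * rou N m - root k))))"
  proof (rule sum.cong[OF refl])
    fix m assume m: "m \<in> {..<N}"
    have A: "cmod (lc * (\<Prod>k<n. of_real r * rou N m - root k)) = cmod lc * (\<Prod>k<n. cmod (of_real r * rou N m - root k))"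
      by (simp add: norm_mult prod_norm)
    have B: "ln (\<Prod>k<n. cmod (of_real r * rou N m - root k)) = (\<Sum>k<n. ln (cmod (of_real r * rou N m - root k)))"
      by (rule ln_prod) (use nz m in auto)
    have C: "(\<Prod>k<n. cmod (of_real r * rou N m - root k)) > 0"
      using nz m by (intro prod_pos) auto
    show "ln (cmod (lc * (\<Prod>k<n. of_real r * rou N m - root k))) = ln (cmod lc) + (\<Sum>k<n. ln (cmod (of_real r * rou N m - root k)))"
    proof -
      have "ln (cmod lc * (\<Prod>k<n. cmod (of_real r * rou N m - root k))) = ln (cmod lc) + ln (\<Prod>k<n. cmod (of_real r * rou N m - root k))"
        by (rule ln_mult_pos) (use lc C in auto)
      thus ?thesis by (simp only: A B)
    qed
  qed
  also have "\<dots> = real N * ln (cmod lc) + (\<Sum>k<n. \<Sum>m<N. ln (cmod (of_real r * rou N m - root k)))"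
    by (simp add: sum.distrib sum.swap[of _ "{..<N}"])
  also have "(\<Sum>k<n. \<Sum>m<N. ln (cmod (of_real r * rou N m - root k))) = (\<Sum>k<n. ln (cmod (of_real r ^ N - root k ^ N)))"
  proof (rule sum.cong[OF refl])
    fix k assume k: "k \<in> {..<n}"
    have "(\<Sum>m<N. ln (cmod (of_real r * rou N m - root k))) = ln (\<Prod>m<N. cmod (of_real r * rou N m - root k))"
      by (rule ln_prod[symmetric]) (use nz k in auto)
    also have "(\<Prod>m<N. cmod (of_real r * rou N m - root k)) = (\<Prod>m<N. cmod (root k - of_real r * rou N m))"
      by (simp add: norm_minus_commute)
    also have "\<dots> = cmod (\<Prod>m<N. root k - of_real r * rou N m)" by (simp add: prod_norm)
    also have "(\<Prod>m<N. root k - of_real r * rou N m) = root k ^ N - of_real r ^ N"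
      by (rule prod_rou) (use N r in auto)
    also have "cmod (root k ^ N - of_real r ^ N) = cmod (of_real r ^ N - root k ^ N)"
      by (simp add: norm_minus_commute)
    finally show "(\<Sum>m<N. ln (cmod (of_real r * rou N m - root k))) = ln (cmod (of_real r ^ N - root k ^ N))" .
  qed
  finally show ?thesis .
qed

lemma ln_diff_pow_limit:
  fixes a b :: complex
  assumes "cmod b < cmod a"
  shows "(\<lambda>N. ln (cmod (a ^ N - b ^ N)) / real N) \<longlonglongrightarrow> ln (cmod a)"
proof -
  have a0: "a \<noteq> 0" using assms by auto
  define q where "q = b / a"
  have q: "cmod q < 1" using assms a0 by (simp add: q_def norm_divide field_simps)
  have q1: "1 - q ^ N \<noteq> 0" if "N > 0" for N
  proof
    assume "1 - q ^ N = 0"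
    hence "q ^ N = 1" by simp
    hence "cmod q ^ N = 1" by (metis norm_one norm_power)
    moreover have "cmod q ^ N < 1" using q that by (simp add: power_less_one_iff)
    ultimately show False by simp
  qed
  have eq: "ln (cmod (a ^ N - b ^ N)) / real N = ln (cmod a) + ln (cmod (1 - q ^ N)) * inverse (real N)"
    if "N > 0" for N
  proof -
    have "a ^ N - b ^ N = a ^ N * (1 - q ^ N)" using a0 by (simp add: q_def power_divide field_simps)
    hence "cmod (a ^ N - b ^ N) = cmod a ^ N * cmod (1 - q ^ N)" by (simp add: norm_mult norm_power)
    hence "ln (cmod (a ^ N - b ^ N)) = real N * ln (cmod a) + ln (cmod (1 - q ^ N))"
      using a0 q1[OF that] by (simp add: ln_mult ln_realpow)
    thus ?thesis using that by (simp add: field_simps)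
  qed
  have lim1: "(\<lambda>N. ln (cmod (1 - q ^ N))) \<longlonglongrightarrow> ln (cmod (1 - 0))"
    by (intro tendsto_intros LIMSEQ_power_zero q) simp
  have "(\<lambda>N. ln (cmod a) + ln (cmod (1 - q ^ N)) * inverse (real N)) \<longlonglongrightarrow> ln (cmod a) + ln (cmod (1 - 0)) * 0"
    by (intro tendsto_intros lim1 lim_inverse_n)
  hence "(\<lambda>N. ln (cmod a) + ln (cmod (1 - q ^ N)) * inverse (real N)) \<longlonglongrightarrow> ln (cmod a)" by simp
  thus ?thesis
    by (rule Lim_transform_eventually) (use eq in \<open>auto intro!: eventually_sequentiallyI[of 1]\<close>)
qed

definition Mx :: "real \<Rightarrow> complex \<Rightarrow> real" where
  "Mx r z = (if cmod z < r then ln r else ln (cmod z))"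

lemma ln_rN_limit:
  fixes z :: complex
  assumes r: "r > 0" and ne: "cmod z \<noteq> r"
  shows "(\<lambda>N. ln (cmod (of_real r ^ N - z ^ N)) / real N) \<longlonglongrightarrow> Mx r z"
proof (cases "cmod z < r")
  case True
  have "(\<lambda>N. ln (cmod (of_real r ^ N - z ^ N)) / real N) \<longlonglongrightarrow> ln (cmod (of_real r :: complex))"
    by (rule ln_diff_pow_limit) (use True r in simp)
  thus ?thesis using True r by (simp add: Mx_def)
next
  case False
  hence lt: "r < cmod z" using ne by simp
  have "(\<lambda>N. ln (cmod (z ^ N - of_real r ^ N)) / real N) \<longlonglongrightarrow> ln (cmod z)"
    by (rule ln_diff_pow_limit) (use lt r in simp)
  thus ?thesis using False by (simp add: Mx_def norm_minus_commute)
qed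

lemma mean_ln_limit:
  fixes root :: "nat \<Rightarrow> complex" and lc :: complex and r :: real
  assumes r: "r > 0"
    and nz: "\<And>k. k < n \<Longrightarrow> cmod (root k) \<noteq> r"
    and lc: "lc \<noteq> 0"
  shows "(\<lambda>N. (\<Sum>m<N. ln (cmod (lc * (\<Prod>k<n. of_real r * rou N m - root k)))) / real N)
         \<longlonglongrightarrow> ln (cmod lc) + (\<Sum>k<n. Mx r (root k))"
proof -
  have eq: "(\<Sum>m<N. ln (cmod (lc * (\<Prod>k<n. of_real r * rou N m - root k)))) / real N
        = ln (cmod lc) + (\<Sum>k<n. ln (cmod (of_real r ^ N - root k ^ N)) / real N)" if N: "N > 0" for N
  proof -
    have "\<And>k m. k < n \<Longrightarrow> m < N \<Longrightarrow> of_real r * rou N m \<noteq> root k"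
    proof
      fix k m assume "k < n" "m < N" "of_real r * rou N m = root k"
      hence "cmod (root k) = cmod (of_real r * rou N m)" by simp
      also have "\<dots> = r" using r by (simp add: norm_mult norm_rou)
      finally have "cmod (root k) = r" .
      thus False using nz \<open>k < n\<close> by auto
    qed
    from sum_ln_roots[of N r n root lc, OF N r this lc]
    have "(\<Sum>m<N. ln (cmod (lc * (\<Prod>k<n. of_real r * rou N m - root k)))) / real N
       = (real N * ln (cmod lc) + (\<Sum>k<n. ln (cmod (of_real r ^ N - root k ^ N)))) / real N" by simp
    also have "\<dots> = ln (cmod lc) + (\<Sum>k<n. ln (cmod (of_real r ^ N - root k ^ N))) / real N"
      using N by (simp add: field_simps)
    finally show ?thesis by (simp add: sum_divide_distrib)
  qed
  have "(\<lambda>N. ln (cmod lc) + (\<Sum>k<n. ln (cmod (of_real r ^ N - root k ^ N)) / real N))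
        \<longlonglongrightarrow> ln (cmod lc) + (\<Sum>k<n. Mx r (root k))"
    by (intro tendsto_intros ln_rN_limit r nz) simp
  thus ?thesis
    by (rule Lim_transform_eventually) (use eq in \<open>auto intro!: eventually_sequentiallyI[of 1]\<close>)
qed



lemma finite_supp: "finite (supp f)"
  unfolding supp_def by (rule finite_subset[of _ "{..degree f}"]) (auto intro: le_degree)

lemma supp_le_degree: "j \<in> supp f \<Longrightarrow> j \<le> degree f"
  unfolding supp_def by (auto intro: le_degree)

lemma poly_supp: "poly f x = (\<Sum>j\<in>supp f. coeff f j * x ^ j)"
proof -
  have "poly f x = (\<Sum>j\<le>degree f. coeff f j * x ^ j)" by (rule poly_altdef)
  also have "\<dots> = (\<Sum>j\<in>supp f. coeff f j * x ^ j)"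
    by (rule sum.mono_neutral_right) (auto simp: supp_def intro: le_degree)
  finally show ?thesis .
qed

definition Hp :: "complex poly \<Rightarrow> nat \<Rightarrow> complex poly" where
  "Hp f i = smult (1 / coeff f i) f - monom 1 i"

definition hh :: "complex poly \<Rightarrow> nat \<Rightarrow> complex \<Rightarrow> complex" where
  "hh f i x = poly (Hp f i) x / x ^ i"

definition theta :: "complex poly \<Rightarrow> nat \<Rightarrow> real \<Rightarrow> real" where
  "theta f i r = (\<Sum>j\<in>supp f - {i}. cmod (coeff f j) * r ^ j) / (cmod (coeff f i) * r ^ i)"

lemma poly_Hp:
  assumes i: "i \<in> supp f"
  shows "poly (Hp f i) x = (\<Sum>j\<in>supp f - {i}. coeff f j / coeff f i * x ^ j)"
proof -
  have ci: "coeff f i \<noteq> 0" using i by (simp add: supp_def)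
  have "poly (Hp f i) x = (\<Sum>j\<in>supp f. coeff f j * x ^ j) / coeff f i - x ^ i"
    by (simp add: Hp_def poly_monom poly_supp[symmetric])
  also have "(\<Sum>j\<in>supp f. coeff f j * x ^ j) = coeff f i * x ^ i + (\<Sum>j\<in>supp f - {i}. coeff f j * x ^ j)"
    by (rule sum.remove[OF finite_supp i])
  also have "(coeff f i * x ^ i + (\<Sum>j\<in>supp f - {i}. coeff f j * x ^ j)) / coeff f i - x ^ i
      = (\<Sum>j\<in>supp f - {i}. coeff f j * x ^ j) / coeff f i"
    using ci by (simp add: field_simps)
  also have "\<dots> = (\<Sum>j\<in>supp f - {i}. coeff f j / coeff f i * x ^ j)"
    by (simp add: sum_divide_distrib)
  finally show ?thesis .
qed

lemma hh_bound:
  assumes i: "i \<in> supp f" and r: "r > 0" and x: "cmod x = r"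
  shows "cmod (hh f i x) \<le> theta f i r"
proof -
  have ci: "coeff f i \<noteq> 0" using i by (simp add: supp_def)
  have "cmod (poly (Hp f i) x) \<le> (\<Sum>j\<in>supp f - {i}. cmod (coeff f j / coeff f i * x ^ j))"
    unfolding poly_Hp[OF i] by (rule norm_sum)
  also have "\<dots> = (\<Sum>j\<in>supp f - {i}. cmod (coeff f j) * r ^ j) / cmod (coeff f i)"
    using x by (simp add: norm_mult norm_divide norm_power sum_divide_distrib)
  finally have A: "cmod (poly (Hp f i) x) \<le> (\<Sum>j\<in>supp f - {i}. cmod (coeff f j) * r ^ j) / cmod (coeff f i)" .
  have "cmod (hh f i x) = cmod (poly (Hp f i) x) / r ^ i"
    using x by (simp add: hh_def norm_divide norm_power)
  also have "\<dots> \<le> (\<Sum>j\<in>supp f - {i}. cmod (coeff f j) * r ^ j) / cmod (coeff f i) / r ^ i"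
    by (rule divide_right_mono[OF A]) (use r in simp)
  also have "\<dots> = theta f i r" by (simp add: theta_def)
  finally show ?thesis .
qed

lemma f_factor:
  assumes i: "i \<in> supp f" and x: "x \<noteq> 0"
  shows "poly f x = coeff f i * x ^ i * (1 + hh f i x)"
proof -
  have ci: "coeff f i \<noteq> 0" using i by (simp add: supp_def)
  show ?thesis using ci x by (simp add: hh_def Hp_def poly_monom field_simps)
qed

lemma degree_Hp: assumes i: "i \<in> supp f" shows "degree (Hp f i) \<le> degree f"
proof -
  have "degree (Hp f i) \<le> max (degree (smult (1 / coeff f i) f)) (degree (monom (1::complex) i))"
    unfolding Hp_def by (rule degree_diff_le_max)
  moreover have "degree (monom (1::complex) i) \<le> degree f"
    using supp_le_degree[OF i] degree_monom_le[of "1::complex" i] by linarith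
  moreover have "degree (smult (1 / coeff f i) f) \<le> degree f" by (rule degree_smult_le)
  ultimately show ?thesis by linarith
qed

lemma sum_rou_ratio:
  assumes N: "N > 0" and n: "n < N" and q: "q < N" and r: "r \<noteq> 0"
  shows "(\<Sum>m<N. (of_real r * rou N m) ^ n / (of_real r * rou N m) ^ q) = (if n = q then of_nat N else 0)"
proof -
  have eq: "(of_real r * rou N m) ^ n / (of_real r * rou N m) ^ q
      = of_real r ^ n / of_real r ^ q * rou N m ^ (n + N - q)" for m
  proof -
    have ru: "rou N m \<noteq> 0" using norm_rou[of N m] by auto
    have "rou N m ^ (n + N - q) * rou N m ^ q = rou N m ^ n"
      using q rou_pow_N[OF N, of m] by (simp add: power_add[symmetric] power_add)
    hence "rou N m ^ (n + N - q) = rou N m ^ n / rou N m ^ q" using ru by (simp add: field_simps)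
    thus ?thesis by (simp add: power_mult_distrib)
  qed
  have dvd: "N dvd (n + N - q) \<longleftrightarrow> n = q"
  proof
    assume "N dvd (n + N - q)"
    then obtain c where c: "n + N - q = N * c" by auto
    have "0 < n + N - q" "n + N - q < 2 * N" using n q by auto
    hence "N * c < N * 2" "N * c \<noteq> 0" using c by (auto simp: mult.commute)
    hence "c < 2" "c \<noteq> 0" by auto
    hence "c = 1" by simp
    thus "n = q" using c q by simp
  qed simp
  show ?thesis unfolding eq sum_distrib_left[symmetric] sum_rou_pow[OF N] dvd
    using r by simp
qed



lemma mean_hh_pow:
  assumes i: "i \<in> supp f" and r: "r > 0" and N: "N > 0" and k: "k * degree f < N"
  shows "(\<Sum>m<N. hh f i (of_real r * rou N m) ^ k) = of_nat N * coeff (Hp f i ^ k) (i * k)"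
proof -
  define P where "P = Hp f i ^ k"
  define q where "q = i * k"
  have degP: "degree P < N"
  proof -
    have "degree P \<le> degree (Hp f i) * k" unfolding P_def by (rule degree_power_le)
    also have "\<dots> \<le> degree f * k" using degree_Hp[OF i] by simp
    finally show ?thesis using k by (simp add: mult.commute)
  qed
  have qN: "q < N"
  proof -
    have "q \<le> degree f * k" unfolding q_def using supp_le_degree[OF i] by simp
    thus ?thesis using k by (simp add: mult.commute)
  qed
  have xnz: "of_real r * rou N m \<noteq> 0" for m using r norm_rou[of N m] by auto
  have polyP: "poly P x = (\<Sum>n<N. coeff P n * x ^ n)" for x
  proof -
    have "poly P x = (\<Sum>n\<le>degree P. coeff P n * x ^ n)" by (rule poly_altdef)
    also have "\<dots> = (\<Sum>n<N. coeff P n * x ^ n)"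
      by (rule sum.mono_neutral_left) (use degP in \<open>auto simp: coeff_eq_0\<close>)
    finally show ?thesis .
  qed
  have hk: "hh f i x ^ k = poly P x / x ^ q" for x
    by (simp add: hh_def P_def q_def poly_power power_divide power_mult)
  have "(\<Sum>m<N. hh f i (of_real r * rou N m) ^ k)
      = (\<Sum>m<N. \<Sum>n<N. coeff P n * ((of_real r * rou N m) ^ n / (of_real r * rou N m) ^ q))"
    unfolding hk polyP by (simp add: sum_divide_distrib)
  also have "\<dots> = (\<Sum>n<N. coeff P n * (\<Sum>m<N. (of_real r * rou N m) ^ n / (of_real r * rou N m) ^ q))"
    by (subst sum.swap) (simp add: sum_distrib_left)
  also have "\<dots> = (\<Sum>n<N. coeff P n * (if n = q then of_nat N else 0))"
    by (rule sum.cong[OF refl]) (use N qN r in \<open>simp add: sum_rou_ratio\<close>)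
  also have "\<dots> = of_nat N * coeff P q" using qN by (simp add: if_distrib sum.delta cong: if_cong)
  finally show ?thesis by (simp add: P_def q_def)
qed



lemma summable_n_pow:
  fixes t :: real
  assumes t0: "0 \<le> t" and t1: "t < 1"
  shows "summable (\<lambda>k. real k * t ^ k)"
proof -
  define s where "s = (1 + t) / 2"
  have s0: "0 < s" and s1: "s < 1" and ts: "t < s" using t0 t1 by (auto simp: s_def)
  have "norm (t / s) < 1" using t0 ts s0 by (simp add: abs_of_nonneg)
  hence "(\<lambda>k. of_nat k * (t / s) ^ k) \<longlonglongrightarrow> (0::real)" by (rule powser_times_n_limit_0)
  hence ev: "eventually (\<lambda>k. of_nat k * (t / s) ^ k < 1) sequentially"
    by (rule order_tendstoD) simp
  show ?thesis
  proof (rule summable_comparison_test_ev)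
    show "eventually (\<lambda>k. norm (real k * t ^ k) \<le> s ^ k) sequentially"
      using ev
    proof (rule eventually_mono)
      fix k assume "of_nat k * (t / s) ^ k < 1"
      hence "of_nat k * (t / s) ^ k * s ^ k \<le> 1 * s ^ k"
        using s0 by (intro mult_right_mono) auto
      moreover have "of_nat k * (t / s) ^ k * s ^ k = real k * t ^ k"
        using s0 by (simp add: power_divide)
      ultimately show "norm (real k * t ^ k) \<le> s ^ k" using t0 by simp
    qed
    show "summable (\<lambda>k. s ^ k)" using s0 s1 by (intro summable_geometric) simp
  qed
qed

definition ac :: "nat \<Rightarrow> complex" where
  "ac k = (-1) ^ Suc k / of_nat k"

definition beta :: "complex poly \<Rightarrow> nat \<Rightarrow> nat \<Rightarrow> complex" where
  "beta f i k = coeff (Hp f i ^ k) (i * k)"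

definition Phi :: "complex poly \<Rightarrow> nat \<Rightarrow> complex" where
  "Phi f i = (\<Sum>k. ac k * beta f i k)"

lemma norm_ac: "norm (ac k) \<le> 1"
proof -
  have "norm (ac k) = 1 / real k" unfolding ac_def norm_divide norm_power
    by (simp only: norm_of_nat norm_minus_cancel norm_one power_one)
  thus ?thesis by (cases k) auto
qed

lemma mean_ln_h_limit:
  assumes i: "i \<in> supp f" and r: "r > 0" and th: "theta f i r < 1"
  shows "(\<lambda>N. (\<Sum>m<N. ln (cmod (1 + hh f i (of_real r * rou N m)))) / real N) \<longlonglongrightarrow> Re (Phi f i)"
proof -
  define t where "t = theta f i r"
  define d where "d = degree f"
  define w where "w = (\<lambda>N m. hh f i (of_real r * rou N m))"
  have t0: "0 \<le> t" unfolding t_def theta_def using r by (auto intro!: sum_nonneg divide_nonneg_nonneg)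
  have t1: "t < 1" using th by (simp add: t_def)
  have wb: "norm (w N m) \<le> t" for N m
    unfolding w_def t_def by (rule hh_bound[OF i r]) (use r in \<open>simp add: norm_mult norm_rou\<close>)
  have wl: "norm (w N m) < 1" for N m using wb[of N m] t1 by simp
  have mean: "(\<Sum>m<N. w N m ^ k) = of_nat N * beta f i k" if "N > 0" "k * d < N" for N k
    unfolding w_def beta_def d_def by (rule mean_hh_pow[OF i r]) (use that in \<open>auto simp: d_def\<close>)
  have sumb: "norm (\<Sum>m<N. w N m ^ k) \<le> real N * t ^ k" for N k
  proof -
    have "norm (\<Sum>m<N. w N m ^ k) \<le> (\<Sum>m<N. norm (w N m) ^ k)"
      by (rule order.trans[OF norm_sum]) (simp add: norm_power)
    also have "\<dots> \<le> (\<Sum>m<N. t ^ k)" by (intro sum_mono power_mono wb) simp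
    finally show ?thesis by simp
  qed
  have betab: "norm (beta f i k) \<le> t ^ k" for k
  proof -
    define N where "N = k * d + 1"
    have N: "N > 0" "k * d < N" by (auto simp: N_def)
    have "real N * norm (beta f i k) = norm (\<Sum>m<N. w N m ^ k)"
      using mean[OF N] by (simp add: norm_mult)
    also have "\<dots> \<le> real N * t ^ k" by (rule sumb)
    finally show ?thesis using N by simp
  qed
  have sumPhi: "(\<lambda>k. ac k * beta f i k) sums Phi f i"
  proof -
    have "summable (\<lambda>k. ac k * beta f i k)"
    proof (rule summable_comparison_test)
      show "\<exists>N. \<forall>k\<ge>N. norm (ac k * beta f i k) \<le> t ^ k"
      proof (intro exI allI impI)
        fix k :: nat
        have "norm (ac k) * norm (beta f i k) \<le> 1 * t ^ k"
          by (rule mult_mono[OF norm_ac betab]) auto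
        thus "norm (ac k * beta f i k) \<le> t ^ k" by (simp add: norm_mult)
      qed
      show "summable (\<lambda>k. t ^ k)" using t0 t1 by (intro summable_geometric) simp
    qed
    thus ?thesis unfolding Phi_def by (simp add: summable_sums)
  qed
  define L where "L = (\<lambda>N. (\<Sum>m<N. Ln (1 + w N m)) / of_nat N)"
  define mu where "mu = (\<lambda>N k. (\<Sum>m<N. w N m ^ k) / of_nat N)"
  have sumL: "(\<lambda>k. ac k * mu N k) sums L N" if N: "N > 0" for N
  proof -
    have "(\<lambda>k. \<Sum>m<N. ac k * w N m ^ k) sums (\<Sum>m<N. Ln (1 + w N m))"
      by (rule sums_sum) (use Ln_series[OF wl] in \<open>simp add: ac_def\<close>)
    hence "(\<lambda>k. (\<Sum>m<N. ac k * w N m ^ k) / of_nat N) sums ((\<Sum>m<N. Ln (1 + w N m)) / of_nat N)"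
      by (rule sums_divide)
    thus ?thesis unfolding L_def mu_def by (simp add: sum_distrib_left[symmetric])
  qed
  define S where "S = (\<Sum>k. real k * t ^ k)"
  have sumS: "summable (\<lambda>k. real k * t ^ k)" using summable_n_pow[OF t0 t1] .
  have Db: "norm (L N - Phi f i) \<le> 2 * real d * S / real N" if N: "N > 0" for N
  proof -
    have sD: "(\<lambda>k. ac k * mu N k - ac k * beta f i k) sums (L N - Phi f i)"
      by (rule sums_diff[OF sumL[OF N] sumPhi])
    have tb: "norm (ac k * mu N k - ac k * beta f i k) \<le> 2 * real d / real N * (real k * t ^ k)" for k
    proof (cases "k * d < N")
      case True
      have "mu N k = beta f i k" unfolding mu_def using mean[OF N True] N by simp
      thus ?thesis using t0 by simp
    next
      case False
      have "norm (ac k * mu N k - ac k * beta f i k) \<le> norm (mu N k - beta f i k)"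
        using norm_ac[of k] by (simp add: right_diff_distrib[symmetric] norm_mult mult_left_le_one_le)
      also have "\<dots> \<le> norm (mu N k) + norm (beta f i k)" by (rule norm_triangle_ineq4)
      also have "norm (mu N k) \<le> t ^ k"
        unfolding mu_def using sumb[of N k] N by (simp add: norm_divide field_simps)
      also have "t ^ k + norm (beta f i k) \<le> 2 * t ^ k" using betab[of k] by simp
      also have "2 * t ^ k \<le> 2 * real d / real N * (real k * t ^ k)"
      proof -
        have "real N \<le> real k * real d" using False by (simp flip: of_nat_mult)
        hence "1 \<le> real d * real k / real N" using N by (simp add: field_simps)
        hence "2 * t ^ k * 1 \<le> 2 * t ^ k * (real d * real k / real N)"
          using t0 by (intro mult_left_mono) auto
        thus ?thesis by (simp add: field_simps)
      qed
      finally show ?thesis by simp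
    qed
    have sN: "summable (\<lambda>k. norm (ac k * mu N k - ac k * beta f i k))"
      by (rule summable_comparison_test[OF _ summable_mult[OF sumS, of "2 * real d / real N"]])
         (use tb in auto)
    have "norm (L N - Phi f i) = norm (\<Sum>k. ac k * mu N k - ac k * beta f i k)"
      using sD by (simp add: sums_unique[symmetric])
    also have "\<dots> \<le> (\<Sum>k. norm (ac k * mu N k - ac k * beta f i k))" by (rule summable_norm[OF sN])
    also have "\<dots> \<le> (\<Sum>k. 2 * real d / real N * (real k * t ^ k))"
      by (rule suminf_le[OF tb sN summable_mult[OF sumS]])
    also have "\<dots> = 2 * real d / real N * S" unfolding S_def using suminf_mult[OF sumS, of "2 * real d / real N"] by simp
    finally show ?thesis by simp
  qed
  have "(\<lambda>N. L N - Phi f i) \<longlonglongrightarrow> 0"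
  proof (rule Lim_null_comparison)
    show "eventually (\<lambda>N. norm (L N - Phi f i) \<le> 2 * real d * S / real N) sequentially"
      using Db by (intro eventually_sequentiallyI[of 1]) auto
    have "(\<lambda>N. (2 * real d * S) * inverse (real N)) \<longlonglongrightarrow> (2 * real d * S) * 0"
      by (intro tendsto_intros lim_inverse_n)
    thus "(\<lambda>N. 2 * real d * S / real N) \<longlonglongrightarrow> 0" by (simp add: divide_inverse)
  qed
  hence "(\<lambda>N. L N - Phi f i + Phi f i) \<longlonglongrightarrow> 0 + Phi f i" by (intro tendsto_intros)
  hence "L \<longlonglongrightarrow> Phi f i" by simp
  hence "(\<lambda>N. Re (L N)) \<longlonglongrightarrow> Re (Phi f i)" by (rule tendsto_Re)
  moreover have "Re (L N) = (\<Sum>m<N. ln (cmod (1 + hh f i (of_real r * rou N m)))) / real N" for N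
  proof -
    have nz: "1 + w N m \<noteq> 0" for m
    proof
      assume "1 + w N m = 0"
      hence "w N m = -1" by (simp add: add_eq_0_iff)
      thus False using wl[of N m] by simp
    qed
    have "Re (L N) = (\<Sum>m<N. Re (Ln (1 + w N m))) / real N"
      unfolding L_def by (simp add: Re_divide_of_nat Re_sum)
    also have "\<dots> = (\<Sum>m<N. ln (cmod (1 + w N m))) / real N" using nz by simp
    finally show ?thesis by (simp add: w_def)
  qed
  ultimately show ?thesis by simp
qed



locale decomp =
  fixes f :: "complex poly" and root :: "nat \<Rightarrow> complex"
  assumes f0: "f \<noteq> 0"
    and dec: "smult (lead_coeff f) (\<Prod>k<degree f. [:-root k, 1:]) = f"
begin

lemma poly_f: "poly f x = lead_coeff f * (\<Prod>k<degree f. x - root k)"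
proof -
  have "poly f x = poly (smult (lead_coeff f) (\<Prod>k<degree f. [:-root k, 1:])) x" using dec by simp
  thus ?thesis by (simp add: poly_prod)
qed

lemma root_zero: "k < degree f \<Longrightarrow> poly f (root k) = 0"
  unfolding poly_f by (auto intro!: prod_zero)

lemma lc0: "lead_coeff f \<noteq> 0" using f0 by simp

lemma dom_nonzero:
  assumes i: "i \<in> supp f" and r: "r > 0" and th: "theta f i r < 1" and x: "cmod x = r"
  shows "poly f x \<noteq> 0"
proof -
  have x0: "x \<noteq> 0" using x r by auto
  have ci: "coeff f i \<noteq> 0" using i by (simp add: supp_def)
  have "cmod (hh f i x) < 1" using hh_bound[OF i r x] th by simp
  hence "1 + hh f i x \<noteq> 0" by (metis add.inverse_unique norm_minus_cancel norm_one order_less_irrefl)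
  thus ?thesis using f_factor[OF i x0] ci x0 by simp
qed

lemma no_root_on_circle:
  assumes i: "i \<in> supp f" and r: "r > 0" and th: "theta f i r < 1" and k: "k < degree f"
  shows "cmod (root k) \<noteq> r"
  using dom_nonzero[OF i r th] root_zero[OF k] by auto

lemma E_rho:
  assumes i: "i \<in> supp f" and r: "r > 0" and th: "theta f i r < 1"
  shows "ln (cmod (lead_coeff f)) + (\<Sum>k<degree f. Mx r (root k))
       = ln (cmod (coeff f i)) + real i * ln r + Re (Phi f i)"
proof -
  define s where "s = (\<lambda>N. (\<Sum>m<N. ln (cmod (poly f (of_real r * rou N m)))) / real N)"
  have "s \<longlonglongrightarrow> ln (cmod (lead_coeff f)) + (\<Sum>k<degree f. Mx r (root k))"
    unfolding s_def poly_f
    by (rule mean_ln_limit[OF r _ lc0]) (use no_root_on_circle[OF i r th] in auto)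
  moreover have "s \<longlonglongrightarrow> ln (cmod (coeff f i)) + real i * ln r + Re (Phi f i)"
  proof -
    have ci: "coeff f i \<noteq> 0" using i by (simp add: supp_def)
    have eq: "ln (cmod (poly f (of_real r * rou N m))) = ln (cmod (coeff f i)) + real i * ln r
               + ln (cmod (1 + hh f i (of_real r * rou N m)))" for N m
    proof -
      define x where "x = of_real r * rou N m"
      have xr: "cmod x = r" using r by (simp add: x_def norm_mult norm_rou)
      hence x0: "x \<noteq> 0" using r by auto
      have nz: "1 + hh f i x \<noteq> 0" using dom_nonzero[OF i r th xr] f_factor[OF i x0] by auto
      have "cmod (poly f x) = cmod (coeff f i) * r ^ i * cmod (1 + hh f i x)"
        using f_factor[OF i x0] xr by (simp add: norm_mult norm_power)
      hence "ln (cmod (poly f x)) = ln (cmod (coeff f i)) + ln (r ^ i) + ln (cmod (1 + hh f i x))"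
        using ci nz r by (simp add: ln_mult_pos)
      thus ?thesis using r by (simp add: x_def ln_realpow)
    qed
    have seq: "s N = ln (cmod (coeff f i)) + real i * ln r + (\<Sum>m<N. ln (cmod (1 + hh f i (of_real r * rou N m)))) / real N"
      if "N > 0" for N
      using that unfolding s_def eq by (simp add: sum.distrib field_simps)
    have "(\<lambda>N. ln (cmod (coeff f i)) + real i * ln r + (\<Sum>m<N. ln (cmod (1 + hh f i (of_real r * rou N m)))) / real N)
        \<longlonglongrightarrow> ln (cmod (coeff f i)) + real i * ln r + Re (Phi f i)"
      by (intro tendsto_intros mean_ln_h_limit[OF i r th])
    thus ?thesis
      by (rule Lim_transform_eventually) (use seq in \<open>auto intro!: eventually_sequentiallyI[of 1]\<close>)
  qed
  ultimately show ?thesis by (rule LIMSEQ_unique)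
qed

definition K :: "real \<Rightarrow> nat" where
  "K r = card {k. k < degree f \<and> cmod (root k) < r}"

lemma theta_cont: "i \<in> supp f \<Longrightarrow> r > 0 \<Longrightarrow> isCont (theta f i) r"
  unfolding theta_def by (intro continuous_intros) (auto simp: power_eq_0_iff supp_def)

lemma key:
  assumes i: "i \<in> supp f" and r: "r > 0" and th: "theta f i r < 1"
  shows "K r = i"
proof -
  obtain e1 where e1: "e1 > 0" "\<And>y. y \<noteq> r \<Longrightarrow> dist y r < e1 \<Longrightarrow> theta f i y < 1"
    using order_tendstoD(2)[OF theta_cont[OF i r, unfolded isCont_def] th] unfolding eventually_at by auto
  define B where "B = {cmod (root k) - r | k. k < degree f \<and> cmod (root k) > r}"
  have finB: "finite B" unfolding B_def by simp
  define e2 where "e2 = (if B = {} then 1 else Min B)"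
  have e2: "e2 > 0" unfolding e2_def using finB by (auto simp: B_def)
  have e2b: "\<And>k. k < degree f \<Longrightarrow> cmod (root k) > r \<Longrightarrow> r + e2 \<le> cmod (root k)"
  proof -
    fix k assume k: "k < degree f" "cmod (root k) > r"
    hence "cmod (root k) - r \<in> B" unfolding B_def by blast
    hence "e2 \<le> cmod (root k) - r" unfolding e2_def using finB by auto
    thus "r + e2 \<le> cmod (root k)" by simp
  qed
  define r2 where "r2 = r + min e1 e2 / 2"
  have r2: "r < r2" "r2 > 0" using e1 e2 r by (auto simp: r2_def)
  have th2: "theta f i r2 < 1" using e1(2)[of r2] e1 e2 by (auto simp: r2_def dist_real_def)
  have Er: "ln (cmod (lead_coeff f)) + (\<Sum>k<degree f. Mx r (root k))
       = ln (cmod (coeff f i)) + real i * ln r + Re (Phi f i)" by (rule E_rho[OF i r th])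
  have Er2: "ln (cmod (lead_coeff f)) + (\<Sum>k<degree f. Mx r2 (root k))
       = ln (cmod (coeff f i)) + real i * ln r2 + Re (Phi f i)" by (rule E_rho[OF i r2(2) th2])
  have diff: "(\<Sum>k<degree f. Mx r2 (root k) - Mx r (root k)) = real i * (ln r2 - ln r)"
    using Er Er2 by (simp add: sum_subtractf algebra_simps)
  have tm: "Mx r2 (root k) - Mx r (root k) = (if cmod (root k) < r then ln r2 - ln r else 0)"
    if k: "k < degree f" for k
  proof (cases "cmod (root k) < r")
    case True thus ?thesis using r2 by (simp add: Mx_def)
  next
    case False
    hence "cmod (root k) > r" using no_root_on_circle[OF i r th k] by simp
    hence "r + e2 \<le> cmod (root k)" using e2b[OF k] by simp
    hence "r2 < cmod (root k)" using e2 e1 by (simp add: r2_def)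
    thus ?thesis using False by (simp add: Mx_def)
  qed
  have "(\<Sum>k<degree f. Mx r2 (root k) - Mx r (root k)) = (\<Sum>k<degree f. if cmod (root k) < r then ln r2 - ln r else 0)"
    by (rule sum.cong) (auto simp: tm)
  also have "\<dots> = real (K r) * (ln r2 - ln r)"
    by (simp add: sum.If_cases K_def Int_def conj_commute)
  finally have "real (K r) * (ln r2 - ln r) = real i * (ln r2 - ln r)" using diff by (metis of_nat_eq_iff mult_cancel_right)
  moreover have "ln r2 - ln r > 0" using r2 r by simp
  ultimately show ?thesis by simp
qed

end



definition lin :: "complex poly \<Rightarrow> nat \<Rightarrow> real \<Rightarrow> real" where
  "lin f j v = real j * v + ln (cmod (coeff f j))"

definition Tr :: "complex poly \<Rightarrow> real \<Rightarrow> real" where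
  "Tr f v = Max ((\<lambda>j. lin f j v) ` supp f)"

definition Cor :: "complex poly \<Rightarrow> real set" where
  "Cor f = {v. \<exists>i\<in>supp f. \<exists>j\<in>supp f. i \<noteq> j \<and> lin f i v = Tr f v \<and> lin f j v = Tr f v}"

lemma lin_le_Tr: "j \<in> supp f \<Longrightarrow> lin f j v \<le> Tr f v"
  unfolding Tr_def by (rule Max_ge) (auto simp: finite_supp)

lemma Tr_attained: "supp f \<noteq> {} \<Longrightarrow> \<exists>j\<in>supp f. lin f j v = Tr f v"
proof -
  assume "supp f \<noteq> {}"
  hence "Tr f v \<in> (\<lambda>j. lin f j v) ` supp f" unfolding Tr_def by (intro Max_in) (auto simp: finite_supp)
  thus ?thesis by auto
qed

lemma cont_Max_lin:
  assumes "finite A" "A \<noteq> {}"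
  shows "continuous_on UNIV (\<lambda>v. Max ((\<lambda>j. lin f j v) ` A))"
  using assms
proof (induction A rule: finite_ne_induct)
  case (singleton x)
  show ?case by (simp add: lin_def continuous_intros)
next
  case (insert x A)
  have "(\<lambda>v. Max ((\<lambda>j. lin f j v) ` insert x A)) = (\<lambda>v. max (lin f x v) (Max ((\<lambda>j. lin f j v) ` A)))"
    using insert by (auto simp: Max_insert)
  thus ?case using insert by (simp add: lin_def continuous_intros)
qed

lemma corner_between:
  assumes i: "i \<in> supp f" and d1: "\<And>j. j \<in> supp f - {i} \<Longrightarrow> lin f j v1 < lin f i v1"
    and j': "j' \<in> supp f" and d2: "lin f i v2 < lin f j' v2"
  shows "\<exists>c\<in>Cor f. min v1 v2 \<le> c \<and> c \<le> max v1 v2"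
proof -
  have ji: "j' \<noteq> i" using d2 by auto
  define A where "A = supp f - {i}"
  have A: "finite A" "A \<noteq> {}" using ji j' finite_supp[of f] by (auto simp: A_def)
  define M where "M = (\<lambda>v. Max ((\<lambda>j. lin f j v) ` A))"
  define phi where "phi = (\<lambda>v. lin f i v - M v)"
  have cphi: "continuous_on UNIV phi" unfolding phi_def M_def
    by (intro continuous_intros cont_Max_lin A) (simp add: lin_def continuous_intros)
  have p1: "phi v1 > 0"
  proof -
    have "M v1 \<in> (\<lambda>j. lin f j v1) ` A" unfolding M_def using A by (intro Max_in) auto
    then obtain j where "j \<in> A" "M v1 = lin f j v1" by auto
    thus ?thesis using d1 by (simp add: phi_def A_def)
  qed
  have p2: "phi v2 < 0"
  proof -
    have "lin f j' v2 \<le> M v2" unfolding M_def using A ji j' by (intro Max_ge) (auto simp: A_def)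
    thus ?thesis using d2 by (simp add: phi_def)
  qed
  have "\<exists>c. min v1 v2 \<le> c \<and> c \<le> max v1 v2 \<and> phi c = 0"
  proof (cases "v1 \<le> v2")
    case True
    from IVT2'[of phi v2 0 v1, OF _ _ True] p1 p2 cphi show ?thesis using True
      by (auto intro: continuous_on_subset)
  next
    case False
    hence "v2 \<le> v1" by simp
    from IVT'[of phi v2 0 v1, OF _ _ this] p1 p2 cphi show ?thesis using False
      by (auto intro: continuous_on_subset)
  qed
  then obtain c where c: "min v1 v2 \<le> c" "c \<le> max v1 v2" "phi c = 0" by auto
  have "M c \<in> (\<lambda>j. lin f j c) ` A" unfolding M_def using A by (intro Max_in) auto
  then obtain j where j: "j \<in> A" "M c = lin f j c" by auto
  have eqij: "lin f i c = lin f j c" using c(3) j by (simp add: phi_def)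
  have "Tr f c \<le> lin f i c"
  proof -
    obtain k where k: "k \<in> supp f" "lin f k c = Tr f c" using Tr_attained[of f c] i by auto
    show ?thesis
    proof (cases "k = i")
      case True thus ?thesis using k by simp
    next
      case False
      hence "k \<in> A" using k by (simp add: A_def)
      hence "lin f k c \<le> M c" unfolding M_def using A by (intro Max_ge) auto
      thus ?thesis using k c(3) by (simp add: phi_def)
    qed
  qed
  hence "lin f i c = Tr f c" using lin_le_Tr[OF i, of c] by simp
  moreover have "j \<in> supp f" "j \<noteq> i" using j by (auto simp: A_def)
  ultimately have "c \<in> Cor f" unfolding Cor_def using i eqij by auto
  thus ?thesis using c by auto
qed

lemma Cor_nonempty:
  assumes two: "card (supp f) \<ge> 2"
  shows "Cor f \<noteq> {}"
proof -
  have fin: "finite (supp f)" by (rule finite_supp)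
  have ne: "supp f \<noteq> {}" using two by auto
  define a where "a = Min (supp f)"
  define b where "b = Max (supp f)"
  have a: "a \<in> supp f" and b: "b \<in> supp f" using fin ne by (auto simp: a_def b_def)
  have ab: "a < b"
  proof -
    obtain x y where "x \<in> supp f" "y \<in> supp f" "x \<noteq> y"
    proof -
      have "\<not> card (supp f) \<le> Suc 0" using two by simp
      hence "\<not> (\<forall>x\<in>supp f. \<forall>y\<in>supp f. x = y)" using card_le_Suc0_iff_eq[OF fin] by simp
      thus ?thesis using that by blast
    qed
    hence "a \<le> x" "a \<le> y" "x \<le> b" "y \<le> b" using fin by (auto simp: a_def b_def)
    thus ?thesis using \<open>x \<noteq> y\<close> by linarith
  qed
  define B where "B = (\<lambda>j. (ln (cmod (coeff f a)) - ln (cmod (coeff f j))) / (real j - real a)) ` (supp f - {a})"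
  have finB: "finite B" "B \<noteq> {}" using fin b ab by (auto simp: B_def)
  define v1 where "v1 = Min B - 1"
  define v2 where "v2 = (ln (cmod (coeff f a)) - ln (cmod (coeff f b))) / (real b - real a) + 1"
  have d1: "lin f j v1 < lin f a v1" if j: "j \<in> supp f - {a}" for j
  proof -
    have "a \<le> j" using j fin by (auto simp: a_def)
    hence ja: "a < j" using j by auto
    have "(ln (cmod (coeff f a)) - ln (cmod (coeff f j))) / (real j - real a) \<in> B" using j by (auto simp: B_def)
    hence "Min B \<le> (ln (cmod (coeff f a)) - ln (cmod (coeff f j))) / (real j - real a)" using finB by simp
    hence "v1 < (ln (cmod (coeff f a)) - ln (cmod (coeff f j))) / (real j - real a)" by (simp add: v1_def)
    hence "v1 * (real j - real a) < ln (cmod (coeff f a)) - ln (cmod (coeff f j))"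
      using ja by (simp add: pos_less_divide_eq)
    thus ?thesis by (simp add: lin_def algebra_simps)
  qed
  have d2: "lin f a v2 < lin f b v2"
  proof -
    have "(real b - real a) * v2 = ln (cmod (coeff f a)) - ln (cmod (coeff f b)) + (real b - real a)"
      using ab by (simp add: v2_def field_simps)
    thus ?thesis using ab by (simp add: lin_def algebra_simps)
  qed
  from corner_between[OF a d1 b d2] show ?thesis by auto
qed



lemma dom_strict:
  assumes i: "i \<in> supp f" and th: "theta f i (exp g) < 1" and j: "j \<in> supp f - {i}"
  shows "lin f j g < lin f i g"
proof -
  have ci: "cmod (coeff f i) > 0" using i by (simp add: supp_def)
  have cj: "cmod (coeff f j) > 0" using j by (simp add: supp_def)
  have "cmod (coeff f j) * exp g ^ j \<le> (\<Sum>j\<in>supp f - {i}. cmod (coeff f j) * exp g ^ j)"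
    by (rule member_le_sum) (use j finite_supp in auto)
  also have "\<dots> < cmod (coeff f i) * exp g ^ i"
    using th ci by (simp add: theta_def divide_less_eq)
  finally have "cmod (coeff f j) * exp g ^ j < cmod (coeff f i) * exp g ^ i" .
  hence "exp (lin f j g) < exp (lin f i g)"
    using ci cj by (simp add: lin_def exp_add exp_of_nat_mult[symmetric] mult.commute)
  thus ?thesis by simp
qed

lemma dom_distinct:
  assumes s: "s \<in> Cor f" and pq: "p < s" "s < q"
    and ip: "ip \<in> supp f" "theta f ip (exp p) < 1"
    and iq: "iq \<in> supp f" "theta f iq (exp q) < 1"
  shows "ip \<noteq> iq"
proof
  assume eq: "ip = iq"
  obtain a b where ab: "a \<in> supp f" "b \<in> supp f" "a \<noteq> b" "lin f a s = Tr f s" "lin f b s = Tr f s"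
    using s unfolding Cor_def by auto
  obtain c where c: "c \<in> supp f" "c \<noteq> ip" "lin f c s = Tr f s" using ab by metis
  have c1: "lin f c p < lin f ip p" by (rule dom_strict[OF ip]) (use c in auto)
  have c2: "lin f c q < lin f ip q" using dom_strict[OF iq, of c] c eq by auto
  have "lin f c s < lin f ip s"
  proof (cases "real c \<ge> real ip")
    case True
    have "lin f c s - lin f ip s \<le> lin f c q - lin f ip q"
      using mult_nonneg_nonneg[of "q - s" "real c - real ip"] True pq by (simp add: lin_def algebra_simps)
    thus ?thesis using c2 by simp
  next
    case False
    have "lin f c s - lin f ip s \<le> lin f c p - lin f ip p"
      using mult_nonneg_nonneg[of "s - p" "real ip - real c"] False pq by (simp add: lin_def algebra_simps)
    thus ?thesis using c1 by simp
  qed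
  moreover have "lin f ip s \<le> Tr f s" by (rule lin_le_Tr[OF ip(1)])
  ultimately show False using c by simp
qed

lemma gap_dom:
  assumes two: "card (supp f) \<ge> 2"
    and gap: "\<And>c. c \<in> Cor f \<Longrightarrow> \<bar>g - c\<bar> > ln (real (card (supp f)) - 1)"
  shows "\<exists>i\<in>supp f. theta f i (exp g) < 1"
proof -
  define t where "t = card (supp f)"
  define L where "L = ln (real t - 1)"
  have t2: "real t - 1 \<ge> 1" using two by (simp add: t_def)
  have L0: "L \<ge> 0" using t2 by (simp add: L_def)
  have expL: "exp L = real t - 1" using t2 by (simp add: L_def)
  have gap': "\<And>c. c \<in> Cor f \<Longrightarrow> \<bar>g - c\<bar> > L" using gap by (simp add: L_def t_def)
  have ne: "supp f \<noteq> {}" using two by auto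
  obtain i where i: "i \<in> supp f" "lin f i g = Tr f g" using Tr_attained[OF ne] by auto
  have strict: "lin f j g < lin f i g" if j: "j \<in> supp f - {i}" for j
  proof (rule ccontr)
    assume "\<not> ?thesis"
    hence "lin f j g = Tr f g" using lin_le_Tr[of j f g] j i by simp
    hence "g \<in> Cor f" unfolding Cor_def using i j by auto
    thus False using gap'[of g] L0 by simp
  qed
  have strong: "lin f j g < lin f i g - L" if j: "j \<in> supp f - {i}" for j
  proof (rule ccontr)
    assume "\<not> ?thesis"
    hence d0: "lin f i g - lin f j g \<le> L" by simp
    define d where "d = lin f i g - lin f j g"
    have dpos: "d > 0" using strict[OF j] by (simp add: d_def)
    have jne: "real j \<noteq> real i" using j by simp
    define u where "u = g + d / (real j - real i)"
    have lu: "lin f j u = lin f i u"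
      using jne unfolding u_def d_def lin_def by (simp add: field_simps)
    have "\<bar>u - g\<bar> = d / \<bar>real j - real i\<bar>" by (simp add: u_def abs_divide dpos abs_of_pos)
    also have "\<dots> \<le> d"
    proof -
      have "i < j \<or> j < i" using jne by auto
      hence "real (Suc i) \<le> real j \<or> real (Suc j) \<le> real i" by (auto simp only: of_nat_le_iff Suc_le_eq)
      hence "\<bar>real j - real i\<bar> \<ge> 1" by auto
      thus ?thesis using dpos by (simp add: divide_le_eq mult_le_cancel_left1)
    qed
    finally have ug: "\<bar>u - g\<bar> \<le> L" using d0 by (simp add: d_def)
    show False
    proof (cases "lin f i u = Tr f u")
      case True
      hence "u \<in> Cor f" unfolding Cor_def using i(1) j lu by auto
      thus False using gap'[of u] ug by simp
    next
      case False
      hence lt: "lin f i u < Tr f u" using lin_le_Tr[OF i(1), of u] by simp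
      obtain j' where j': "j' \<in> supp f" "lin f j' u = Tr f u" using Tr_attained[OF ne] by auto
      obtain c where c: "c \<in> Cor f" "min g u \<le> c" "c \<le> max g u"
        using corner_between[OF i(1) strict j'(1), of u] lt j' by auto
      have "\<bar>g - c\<bar> \<le> \<bar>u - g\<bar>" using c by (auto simp: min_def max_def abs_if split: if_splits)
      thus False using gap'[OF c(1)] ug by simp
    qed
  qed
  have ci: "cmod (coeff f i) > 0" using i by (simp add: supp_def)
  have cardA: "card (supp f - {i}) = t - 1" using i(1) finite_supp by (simp add: t_def)
  have Ane: "supp f - {i} \<noteq> {}"
  proof
    assume e: "supp f - {i} = {}"
    have "card (supp f - {i}) = 0" by (simp only: e card.empty)
    thus False using cardA t2 by linarith
  qed
  have term_eq: "cmod (coeff f j) * exp g ^ j = exp (lin f j g)" if "j \<in> supp f" for j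
  proof -
    have "cmod (coeff f j) > 0" using that by (simp add: supp_def)
    thus ?thesis by (simp add: lin_def exp_add exp_of_nat_mult[symmetric] mult.commute)
  qed
  have "(\<Sum>j\<in>supp f - {i}. cmod (coeff f j) * exp g ^ j) = (\<Sum>j\<in>supp f - {i}. exp (lin f j g))"
    by (rule sum.cong) (auto simp: term_eq)
  also have "\<dots> < (\<Sum>j\<in>supp f - {i}. exp (lin f i g - L))"
    by (rule sum_strict_mono) (use finite_supp Ane strong in auto)
  also have "\<dots> = real (t - 1) * (exp (lin f i g) / exp L)" by (simp add: exp_diff cardA)
  also have "\<dots> = exp (lin f i g)" using expL t2 by (simp add: of_nat_diff)
  also have "\<dots> = cmod (coeff f i) * exp g ^ i" using term_eq[OF i(1)] by simp
  finally have "(\<Sum>j\<in>supp f - {i}. cmod (coeff f j) * exp g ^ j) < cmod (coeff f i) * exp g ^ i" .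
  hence "theta f i (exp g) < 1" using ci by (simp add: theta_def divide_less_eq)
  thus ?thesis using i(1) by auto
qed

lemma cover_measure:
  fixes C :: "real set"
  assumes fin: "finite C" and L: "L \<ge> 0" and ab: "a \<le> b"
    and cov: "{a..b} \<subseteq> (\<Union>c\<in>C. {c - L..c + L})"
  shows "b - a \<le> 2 * real (card C) * L"
proof -
  have "ennreal (b - a) = emeasure lborel {a..b}" using ab by simp
  also have "\<dots> \<le> emeasure lborel (\<Union>c\<in>C. {c - L..c + L})"
    by (rule emeasure_mono[OF cov]) (auto intro!: sets.finite_UN fin)
  also have "\<dots> \<le> (\<Sum>c\<in>C. emeasure lborel {c - L..c + L})"
    by (rule emeasure_subadditive_finite[OF fin]) auto
  also have "\<dots> = (\<Sum>c\<in>C. ennreal (2 * L))" using L by simp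
  also have "\<dots> = ennreal (\<Sum>c\<in>C. 2 * L)" using L by (subst sum_ennreal) auto
  also have "\<dots> = ennreal (2 * real (card C) * L)" by (simp add: mult_ac)
  finally show ?thesis using L by (simp add: ennreal_le_iff)
qed



definition pt :: "complex poly \<Rightarrow> nat \<Rightarrow> real \<times> real" where
  "pt f a = (real a, - ln (cmod (coeff f a)))"

lemma inner_pt: "inner (v, -1) (pt f a) = lin f a v"
  by (simp add: pt_def lin_def mult.commute)

lemma ArchNewt_pt: "ArchNewt f = convex hull (pt f ` supp f)"
  unfolding ArchNewt_def pt_def by (rule arg_cong[where f = "\<lambda>X. convex hull X"]) auto

lemma hull_bound:
  assumes "\<And>a. a \<in> A \<Longrightarrow> lin f a v \<le> M"
  shows "\<And>x. x \<in> convex hull (pt f ` A) \<Longrightarrow> inner (v, -1) x \<le> M"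
proof -
  have "convex hull (pt f ` A) \<subseteq> {x. inner (v, -1) x \<le> M}"
    by (rule hull_minimal) (use assms in \<open>auto simp: inner_pt convex_halfspace_le\<close>)
  thus "\<And>x. x \<in> convex hull (pt f ` A) \<Longrightarrow> inner (v, -1) x \<le> M" by auto
qed

lemma ArchTrop_eq:
  assumes ne: "supp f \<noteq> {}"
  shows "ArchTrop f = Cor f"
proof
  have bound: "\<And>x. x \<in> ArchNewt f \<Longrightarrow> inner (v, -1) x \<le> Tr f v" for v
    unfolding ArchNewt_pt by (rule hull_bound) (rule lin_le_Tr)
  have inface: "pt f a \<in> face_outer (ArchNewt f) (v, -1)" if a: "a \<in> supp f" "lin f a v = Tr f v" for a v
  proof -
    have "pt f a \<in> ArchNewt f" unfolding ArchNewt_pt using a by (intro hull_inc) auto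
    thus ?thesis unfolding face_outer_def using bound a by (auto simp: inner_pt)
  qed
  show "Cor f \<subseteq> ArchTrop f"
  proof
    fix v assume "v \<in> Cor f"
    then obtain i j where ij: "i \<in> supp f" "j \<in> supp f" "i \<noteq> j" "lin f i v = Tr f v" "lin f j v = Tr f v"
      unfolding Cor_def by auto
    have "pt f i \<noteq> pt f j" using ij by (simp add: pt_def)
    thus "v \<in> ArchTrop f" unfolding ArchTrop_def using inface[of i v] inface[of j v] ij by blast
  qed
  show "ArchTrop f \<subseteq> Cor f"
  proof
    fix v assume v: "v \<in> ArchTrop f"
    show "v \<in> Cor f"
    proof (rule ccontr)
      assume nc: "v \<notin> Cor f"
      obtain a where a: "a \<in> supp f" "lin f a v = Tr f v" using Tr_attained[OF ne] by auto
      have others: "lin f b v < Tr f v" if b: "b \<in> supp f - {a}" for b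
      proof -
        have "lin f b v \<le> Tr f v" using b lin_le_Tr by auto
        moreover have "lin f b v \<noteq> Tr f v" using nc a b unfolding Cor_def by auto
        ultimately show ?thesis by simp
      qed
      have only: "x = pt f a" if x: "x \<in> face_outer (ArchNewt f) (v, -1)" for x
      proof -
        have xH: "x \<in> ArchNewt f" and xmax: "\<forall>q\<in>ArchNewt f. inner (v, -1) q \<le> inner (v, -1) x"
          using x unfolding face_outer_def by auto
        have "pt f a \<in> ArchNewt f" unfolding ArchNewt_pt using a by (intro hull_inc) auto
        hence "Tr f v \<le> inner (v, -1) x" using xmax a by (auto simp: inner_pt)
        hence xT: "inner (v, -1) x = Tr f v" using bound[OF xH, of v] by simp
        show ?thesis
        proof (cases "supp f - {a} = {}")
          case True
          hence "pt f ` supp f = {pt f a}" using a by auto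
          thus ?thesis using xH unfolding ArchNewt_pt by simp
        next
          case False
          define B where "B = supp f - {a}"
          have finB: "finite B" using finite_supp by (simp add: B_def)
          define T' where "T' = Max ((\<lambda>b. lin f b v) ` B)"
          have T'b: "lin f b v \<le> T'" if "b \<in> B" for b
            unfolding T'_def using finB that by (intro Max_ge) auto
          have T'lt: "T' < Tr f v"
          proof -
            have "T' \<in> (\<lambda>b. lin f b v) ` B" unfolding T'_def using finB False by (intro Max_in) (auto simp: B_def)
            thus ?thesis using others by (auto simp: B_def)
          qed
          have "pt f ` supp f = insert (pt f a) (pt f ` B)" using a by (auto simp: B_def)
          hence "x \<in> convex hull (insert (pt f a) (pt f ` B))" using xH unfolding ArchNewt_pt by simp
          then obtain u w y where uwy: "u \<ge> 0" "w \<ge> 0" "u + w = 1" "y \<in> convex hull (pt f ` B)"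
              "x = u *\<^sub>R pt f a + w *\<^sub>R y"
          proof -
            have "pt f ` B \<noteq> {}" using False by (simp add: B_def)
            from convex_hull_insert[OF this, of "pt f a"] \<open>x \<in> convex hull (insert (pt f a) (pt f ` B))\<close>
            show ?thesis using that by blast
          qed
          have yb: "inner (v, -1) y \<le> T'" by (rule hull_bound[OF _ uwy(4)]) (rule T'b)
          have "inner (v, -1) x = u * Tr f v + w * inner (v, -1) y"
            using uwy(5) a by (simp add: inner_add_right inner_pt)
          hence e1: "Tr f v = u * Tr f v + w * inner (v, -1) y" using xT by simp
          have "u = 1 - w" using uwy(3) by simp
          hence e2: "u * Tr f v = Tr f v - w * Tr f v" by (simp add: left_diff_distrib)
          have "w * Tr f v - w * inner (v, -1) y = 0" using e1 e2 by linarith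
          hence "w * (Tr f v - inner (v, -1) y) = 0" by (simp add: right_diff_distrib)
          moreover have "Tr f v - inner (v, -1) y > 0" using yb T'lt by simp
          ultimately have "w = 0" by simp
          hence "u = 1" using uwy(3) by simp
          thus ?thesis using uwy(5) \<open>w = 0\<close> by simp
        qed
      qed
      obtain p q where "p \<in> face_outer (ArchNewt f) (v, -1)" "q \<in> face_outer (ArchNewt f) (v, -1)" "p \<noteq> q"
        using v unfolding ArchTrop_def by auto
      thus False using only[of p] only[of q] by simp
    qed
  qed
qed



theorem corollary3p1:
  fixes f :: "complex poly" and t l :: nat
  assumes "card (supp f) = t" and "t \<ge> 2"
    and "finite (ArchTrop f)" and "card (ArchTrop f) = l"
  shows "(SUP \<sigma>\<in>ArchTrop f. INF \<rho>\<in>Amoeba f. \<bar>\<rho> - \<sigma>\<bar>)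
           \<le> (2 * real l - 1) * ln (real t - 1)"
proof -
  note tS = assms(1) and t2 = assms(2) and finA = assms(3) and lA = assms(4)
  have two: "card (supp f) \<ge> 2" using tS t2 by simp
  have ne: "supp f \<noteq> {}" using two by auto
  have f0: "f \<noteq> 0" using ne by (auto simp: supp_def)
  obtain root where dec: "smult (lead_coeff f) (\<Prod>k<degree f. [:-root k, 1:]) = f"
    using complex_poly_decompose' by blast
  interpret decomp f root by standard (use f0 dec in auto)
  have AC: "ArchTrop f = Cor f" by (rule ArchTrop_eq[OF ne])
  have Cne: "Cor f \<noteq> {}" by (rule Cor_nonempty[OF two])
  have finC: "finite (Cor f)" using finA AC by simp
  have lC: "card (Cor f) = l" using lA AC by simp
  have l1: "l \<ge> 1" using Cne finC lC by (metis card_0_eq less_one not_less)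
  define L where "L = ln (real t - 1)"
  have L0: "L \<ge> 0" using t2 by (simp add: L_def)
  define D where "D = (2 * real l - 1) * L"
  have D0: "D \<ge> 0" using l1 L0 by (simp add: D_def)
  have DL: "D + L = 2 * real l * L" by (simp add: D_def algebra_simps)
  have gapd: "\<exists>i\<in>supp f. theta f i (exp g) < 1" if "\<And>c. c \<in> Cor f \<Longrightarrow> \<bar>g - c\<bar> > L" for g
    by (rule gap_dom[OF two]) (use that tS in \<open>auto simp: L_def\<close>)
  have main: "(INF \<rho>\<in>Amoeba f. \<bar>\<rho> - \<sigma>\<bar>) \<le> D" if s: "\<sigma> \<in> Cor f" for \<sigma>
  proof (rule field_le_epsilon)
    fix e :: real assume e: "e > 0"
    have left: "\<exists>p. \<sigma> - D - e < p \<and> p < \<sigma> \<and> (\<forall>c\<in>Cor f. \<bar>p - c\<bar> > L)"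
    proof (rule ccontr)
      assume nl: "\<not> ?thesis"
      have "{\<sigma> - D - e / 2 .. \<sigma> + L} \<subseteq> (\<Union>c\<in>Cor f. {c - L..c + L})"
      proof
        fix g assume g: "g \<in> {\<sigma> - D - e / 2 .. \<sigma> + L}"
        show "g \<in> (\<Union>c\<in>Cor f. {c - L..c + L})"
        proof (cases "g < \<sigma>")
          case True
          hence "\<not> (\<forall>c\<in>Cor f. \<bar>g - c\<bar> > L)" using nl g e by auto
          then obtain c where "c \<in> Cor f" "\<bar>g - c\<bar> \<le> L" by auto
          thus ?thesis by (auto simp: abs_le_iff intro!: bexI[of _ c])
        next
          case False
          thus ?thesis using g s L0 by (auto intro!: bexI[of _ \<sigma>])
        qed
      qed
      from cover_measure[OF finC L0 _ this] have "\<sigma> + L - (\<sigma> - D - e / 2) \<le> 2 * real l * L"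
        using L0 e lC D0 by simp
      thus False using DL e by simp
    qed
    have right: "\<exists>q. \<sigma> < q \<and> q < \<sigma> + D + e \<and> (\<forall>c\<in>Cor f. \<bar>q - c\<bar> > L)"
    proof (rule ccontr)
      assume nr: "\<not> ?thesis"
      have "{\<sigma> - L .. \<sigma> + D + e / 2} \<subseteq> (\<Union>c\<in>Cor f. {c - L..c + L})"
      proof
        fix g assume g: "g \<in> {\<sigma> - L .. \<sigma> + D + e / 2}"
        show "g \<in> (\<Union>c\<in>Cor f. {c - L..c + L})"
        proof (cases "g > \<sigma>")
          case True
          hence "\<not> (\<forall>c\<in>Cor f. \<bar>g - c\<bar> > L)" using nr g e by auto
          then obtain c where "c \<in> Cor f" "\<bar>g - c\<bar> \<le> L" by auto
          thus ?thesis by (auto simp: abs_le_iff intro!: bexI[of _ c])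
        next
          case False
          thus ?thesis using g s L0 by (auto intro!: bexI[of _ \<sigma>])
        qed
      qed
      from cover_measure[OF finC L0 _ this] have "\<sigma> + D + e / 2 - (\<sigma> - L) \<le> 2 * real l * L"
        using L0 e lC D0 by simp
      thus False using DL e by simp
    qed
    obtain p where p: "\<sigma> - D - e < p" "p < \<sigma>" "\<forall>c\<in>Cor f. \<bar>p - c\<bar> > L" using left by auto
    obtain q where q: "\<sigma> < q" "q < \<sigma> + D + e" "\<forall>c\<in>Cor f. \<bar>q - c\<bar> > L" using right by auto
    obtain ip where ip: "ip \<in> supp f" "theta f ip (exp p) < 1" using gapd[of p] p by auto
    obtain iq where iq: "iq \<in> supp f" "theta f iq (exp q) < 1" using gapd[of q] q by auto
    have Kp: "K (exp p) = ip" by (rule key[OF ip(1) _ ip(2)]) simp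
    have Kq: "K (exp q) = iq" by (rule key[OF iq(1) _ iq(2)]) simp
    have "ip \<noteq> iq" by (rule dom_distinct[OF s p(2) q(1) ip iq])
    hence Kne: "K (exp p) \<noteq> K (exp q)" using Kp Kq by simp
    have "\<exists>k. k < degree f \<and> exp p \<le> cmod (root k) \<and> cmod (root k) < exp q"
    proof (rule ccontr)
      assume na: "\<not> ?thesis"
      have pq: "exp p < exp q" using p(2) q(1) by simp
      have "{k. k < degree f \<and> cmod (root k) < exp p} = {k. k < degree f \<and> cmod (root k) < exp q}"
      proof (intro Collect_cong iffI)
        fix k assume "k < degree f \<and> cmod (root k) < exp p"
        thus "k < degree f \<and> cmod (root k) < exp q" using pq by (meson less_trans)
      next
        fix k assume a: "k < degree f \<and> cmod (root k) < exp q"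
        show "k < degree f \<and> cmod (root k) < exp p"
        proof (rule ccontr)
          assume "\<not> (k < degree f \<and> cmod (root k) < exp p)"
          hence "exp p \<le> cmod (root k)" using a by simp
          thus False using na a by blast
        qed
      qed
      thus False using Kne unfolding K_def by simp
    qed
    then obtain k where k: "k < degree f" "exp p \<le> cmod (root k)" "cmod (root k) < exp q" by auto
    have rk0: "root k \<noteq> 0" using k(2) exp_gt_zero[of p] by auto
    have "ln (cmod (root k)) \<in> Amoeba f"
      unfolding Amoeba_def using rk0 root_zero[OF k(1)] by auto
    moreover have "p \<le> ln (cmod (root k))"
      using k rk0 by (auto simp: ln_ge_iff)
    moreover have "ln (cmod (root k)) < ln (exp q)"
      using k rk0 by (subst ln_less_cancel_iff) auto
    hence "ln (cmod (root k)) < q" by simp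
    ultimately have "(INF \<rho>\<in>Amoeba f. \<bar>\<rho> - \<sigma>\<bar>) \<le> \<bar>ln (cmod (root k)) - \<sigma>\<bar>"
      by (intro cINF_lower) (auto intro: bdd_belowI[of _ 0])
    also have "\<dots> \<le> D + e" using \<open>p \<le> ln (cmod (root k))\<close> \<open>ln (cmod (root k)) < q\<close> p q by auto
    finally show "(INF \<rho>\<in>Amoeba f. \<bar>\<rho> - \<sigma>\<bar>) \<le> D + e" .
  qed
  have "(SUP \<sigma>\<in>ArchTrop f. INF \<rho>\<in>Amoeba f. \<bar>\<rho> - \<sigma>\<bar>) \<le> D"
    unfolding AC by (rule cSUP_least[OF Cne main])
  thus ?thesis by (simp add: D_def L_def)
qed


end
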